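(* Let $\Gamma$, $c$, $r$, $M$ and $\mathcal{A}$ be as in the preceding setting (the generic canonical $\Gamma$ with diagonal part and lower Jordan blocks, and the solution $(r,M)=(r,FGH)$ of $(pI-\Gamma)\tilde r=(pI+\Gamma)r$, $(qI-\Gamma)\hat r=(qI+\Gamma)r$, $M\Gamma+\Gamma M=rc$), and let $(r',M')=(\mathcal{A}r,\mathcal{A}M)$. Fix $(n,m)$ with $I+M'(n,m)$ invertible. Then for all $i,j\in\mathbb{Z}$ the quantity $S^{(i,j)}=c\,\Gamma^j(I+M')^{-1}\Gamma^i r'$ satisfies $S^{(i,j)}=S^{(j,i)}$.
   Context: Setting: $p,q\in\mathbb{C}$; $\Gamma=\mathrm{Diag}(\mathrm{Diag}(k_1,\dots,k_{N_1}),\Gamma^{[N_2]}_J(\kappa_2),\dots,\Gamma^{[N_s]}_J(\kappa_s))$, where $\Gamma^{[N]}_J(\kappa)$ is the $N\times N$ matrix with $\kappa$ on the diagonal and $1$ on the subdiagonal; all eigenvalues $\lambda,\mu$ of $\Gamma$ satisfy $\lambda+\mu\ne0$ (so $\Gamma$ is invertible) and $p,q\notin\{\pm\lambda\}$. $c=(c^{(1)},\dots,c^{(s)})$ constant, blocks of lengths $N_1,\dots,N_s$. Plane wave factor $\rho(k)=\big(\tfrac{p+k}{p-k}\big)^n\big(\tfrac{q+k}{q-k}\big)^m\rho^0$, $\rho_i=\rho(k_i)$. $r=(\rho_1,\dots,\rho_{N_1},r_J(\kappa_2),\dots,r_J(\kappa_s))^T$ with $r_J(\kappa)=(\rho,\partial_k\rho/1!,\dots,\partial_k^{N_j-1}\rho/(N_j-1)!)|_{k=\kappa}$.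 $M=FGH$ with $F=\mathrm{Diag}(\rho_1,\dots,\rho_{N_1},F_J(\kappa_2),\dots,F_J(\kappa_s))$, $F_J(\kappa)$ lower triangular with $(i,j)$ entry $\partial_k^{i-j}\rho|_{k=\kappa}/(i-j)!$; $H=\mathrm{Diag}(c_1,\dots,c_{N_1},H_J(c^{(2)}),\dots,H_J(c^{(s)}))$, $H_J(d_1,\dots,d_N)$ with $(i,j)$ entry $d_{i+j-1}$ if $i+j-1\le N$ else $0$; $G$ symmetric block matrix with $G_{1,1}=(\frac1{k_i+k_j})$, $G_{1,j}=G_{j,1}^T$ having $(l,t)$ entry $-\big(\frac{-1}{k_l+\kappa_j}\big)^t$, and $G_{i,j}=G_{j,i}^T$ ($1<i\le j$) having $(l,t)$ entry $\binom{l+t-2}{l-1}\frac{(-1)^{l+t}}{(\kappa_i+\kappa_j)^{l+t-1}}$. $\mathcal{A}=\mathrm{Diag}(I_{N_1},\mathcal{A}_2,\dots,\mathcal{A}_s)$ with each $\mathcal{A}_j$ a constant lower triangular Toeplitz matrix (possibly all identities). $\tilde{}$, $\hat{}$ denote shifts in $n$, $m$. *)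

theory Defs
  imports "HOL-Analysis.Analysis" "Jordan_Normal_Form.Matrix"
begin

text \<open>Block data.  ks = (k_1,...,k_N1) is the diagonal part; js = [(kappa_2,N_2),...,(kappa_s,N_s)]
  lists the lower Jordan blocks.  Global indices are 0-based.  An index is either
  D a (a-th entry of the diagonal part) or J b l (local 0-based position l inside the
  b-th Jordan block, b 0-based, i.e. block number b+2 of the paper).\<close>

datatype idx = D nat | J nat nat

fun jpos :: "nat list \<Rightarrow> nat \<Rightarrow> nat \<times> nat" where
  "jpos [] i = (0, i)"
| "jpos (n # ns) i = (if i < n then (0, i) else (let (b, l) = jpos ns (i - n) in (Suc b, l)))"

definition Ntot :: "complex list \<Rightarrow> (complex \<times> nat) list \<Rightarrow> nat" where
  "Ntot ks js = length ks + sum_list (map snd js)"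

definition ix :: "complex list \<Rightarrow> (complex \<times> nat) list \<Rightarrow> nat \<Rightarrow> idx" where
  "ix ks js g = (if g < length ks then D g
                 else (case jpos (map snd js) (g - length ks) of (b, l) \<Rightarrow> J b l))"

definition rho :: "complex \<Rightarrow> complex \<Rightarrow> int \<Rightarrow> int \<Rightarrow> complex \<Rightarrow> complex \<Rightarrow> complex" where
  "rho p q n m rho0 k = ((p + k) / (p - k)) powi n * ((q + k) / (q - k)) powi m * rho0"

definition drho :: "complex \<Rightarrow> complex \<Rightarrow> int \<Rightarrow> int \<Rightarrow> complex \<Rightarrow> nat \<Rightarrow> complex \<Rightarrow> complex" where
  "drho p q n m rho0 l \<kappa> = (deriv ^^ l) (rho p q n m rho0) \<kappa> / of_nat (fact l)"

definition Gam :: "complex list \<Rightarrow> (complex \<times> nat) list \<Rightarrow> complex mat" where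
  "Gam ks js = mat (Ntot ks js) (Ntot ks js) (\<lambda>(g, h).
     case (ix ks js g, ix ks js h) of
       (D a, D a') \<Rightarrow> (if a = a' then ks ! a else 0)
     | (J b l, J b' t) \<Rightarrow> (if b = b' then (if l = t then fst (js ! b) else if l = Suc t then 1 else 0) else 0)
     | _ \<Rightarrow> 0)"

text \<open>the constant row vector c = (c^(1),...,c^(s)); cD = c^(1), cJ ! b = c^(b+2)\<close>
definition cvec :: "complex list \<Rightarrow> (complex \<times> nat) list \<Rightarrow> complex list \<Rightarrow> complex list list \<Rightarrow> complex vec" where
  "cvec ks js cD cJ = vec (Ntot ks js) (\<lambda>g.
     case ix ks js g of D a \<Rightarrow> cD ! a | J b l \<Rightarrow> cJ ! b ! l)"

definition rvec :: "complex list \<Rightarrow> (complex \<times> nat) list \<Rightarrow> complex \<Rightarrow> complex \<Rightarrow> int \<Rightarrow> int \<Rightarrow> complex \<Rightarrow> complex vec" where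
  "rvec ks js p q n m rho0 = vec (Ntot ks js) (\<lambda>g.
     case ix ks js g of D a \<Rightarrow> rho p q n m rho0 (ks ! a)
                      | J b l \<Rightarrow> drho p q n m rho0 l (fst (js ! b)))"

definition Fmat :: "complex list \<Rightarrow> (complex \<times> nat) list \<Rightarrow> complex \<Rightarrow> complex \<Rightarrow> int \<Rightarrow> int \<Rightarrow> complex \<Rightarrow> complex mat" where
  "Fmat ks js p q n m rho0 = mat (Ntot ks js) (Ntot ks js) (\<lambda>(g, h).
     case (ix ks js g, ix ks js h) of
       (D a, D a') \<Rightarrow> (if a = a' then rho p q n m rho0 (ks ! a) else 0)
     | (J b l, J b' t) \<Rightarrow> (if b = b' \<and> t \<le> l then drho p q n m rho0 (l - t) (fst (js ! b)) else 0)
     | _ \<Rightarrow> 0)"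

text \<open>G; local positions are 0-based, so paper's (l,t) is (l+1,t+1) here\<close>
definition Gmat :: "complex list \<Rightarrow> (complex \<times> nat) list \<Rightarrow> complex mat" where
  "Gmat ks js = mat (Ntot ks js) (Ntot ks js) (\<lambda>(g, h).
     case (ix ks js g, ix ks js h) of
       (D a, D a') \<Rightarrow> 1 / (ks ! a + ks ! a')
     | (D a, J b t) \<Rightarrow> - (((-1) / (ks ! a + fst (js ! b))) ^ Suc t)
     | (J b l, D a) \<Rightarrow> - (((-1) / (ks ! a + fst (js ! b))) ^ Suc l)
     | (J b l, J b' t) \<Rightarrow> (of_nat ((l + t) choose l) * (-1) ^ (l + t)
                            / (fst (js ! b) + fst (js ! b')) ^ (l + t + 1)))"

definition Hmat :: "complex list \<Rightarrow> (complex \<times> nat) list \<Rightarrow> complex list \<Rightarrow> complex list list \<Rightarrow> complex mat" where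
  "Hmat ks js cD cJ = mat (Ntot ks js) (Ntot ks js) (\<lambda>(g, h).
     case (ix ks js g, ix ks js h) of
       (D a, D a') \<Rightarrow> (if a = a' then cD ! a else 0)
     | (J b l, J b' t) \<Rightarrow> (if b = b' \<and> l + t + 1 \<le> snd (js ! b) then cJ ! b ! (l + t) else 0)
     | _ \<Rightarrow> 0)"

text \<open>calA = Diag(I, A_2,...,A_s), A_j lower triangular Toeplitz with first column aJ ! b\<close>
definition Amat :: "complex list \<Rightarrow> (complex \<times> nat) list \<Rightarrow> complex list list \<Rightarrow> complex mat" where
  "Amat ks js aJ = mat (Ntot ks js) (Ntot ks js) (\<lambda>(g, h).
     case (ix ks js g, ix ks js h) of
       (D a, D a') \<Rightarrow> (if a = a' then 1 else 0)
     | (J b l, J b' t) \<Rightarrow> (if b = b' \<and> t \<le> l then aJ ! b ! (l - t) else 0)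
     | _ \<Rightarrow> 0)"

definition Mmat :: "complex list \<Rightarrow> (complex \<times> nat) list \<Rightarrow> complex \<Rightarrow> complex \<Rightarrow> int \<Rightarrow> int \<Rightarrow> complex
    \<Rightarrow> complex list \<Rightarrow> complex list list \<Rightarrow> complex mat" where
  "Mmat ks js p q n m rho0 cD cJ = Fmat ks js p q n m rho0 * Gmat ks js * Hmat ks js cD cJ"

definition minv :: "complex mat \<Rightarrow> complex mat" where
  "minv A = (SOME B. inverts_mat A B \<and> inverts_mat B A)"

definition mpowi :: "complex mat \<Rightarrow> int \<Rightarrow> complex mat" where
  "mpowi A j = (if 0 \<le> j then A ^\<^sub>m nat j else (minv A) ^\<^sub>m nat (- j))"

end

theory Submission
  imports Defs
begin

lemma jpos_props:
  "i < sum_list ns \<Longrightarrow> jpos ns i = (b,l) \<Longrightarrow> b < length ns \<and> l < ns!b \<and> i = sum_list (take b ns) + l"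
proof (induction ns arbitrary: i b l)
  case Nil then show ?case by simp
next
  case (Cons n ns)
  show ?case
  proof (cases "i < n")
    case True with Cons.prems show ?thesis by auto
  next
    case False
    obtain b' l' where e: "jpos ns (i - n) = (b', l')" by (cases "jpos ns (i - n)")
    with False Cons.prems have b: "b = Suc b'" "l = l'" by auto
    from Cons.prems False have "i - n < sum_list ns" by simp
    from Cons.IH[OF this e] False show ?thesis using b by auto
  qed
qed

lemma jpos_eq:
  "b < length ns \<Longrightarrow> l < ns!b \<Longrightarrow> jpos ns (sum_list (take b ns) + l) = (b,l)"
proof (induction ns arbitrary: b)
  case Nil then show ?case by simp
next
  case (Cons n ns)
  then show ?case by (cases b) auto
qed

definition Idx :: "complex list \<Rightarrow> (complex \<times> nat) list \<Rightarrow> idx set" where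
  "Idx ks js = D ` {..<length ks} \<union> (\<lambda>(b,l). J b l) ` (SIGMA b:{..<length js}. {..<snd (js!b)})"

lemma ix_cases:
  assumes "g < Ntot ks js"
  shows "(ix ks js g = D g \<and> g < length ks) \<or>
    (\<exists>b l. ix ks js g = J b l \<and> b < length js \<and> l < snd (js!b) \<and>
        g = length ks + sum_list (take b (map snd js)) + l)"
proof (cases "g < length ks")
  case True then show ?thesis by (simp add: ix_def)
next
  case False
  obtain b l where e: "jpos (map snd js) (g - length ks) = (b,l)" by (cases "jpos (map snd js) (g - length ks)")
  have "g - length ks < sum_list (map snd js)" using assms False by (simp add: Ntot_def)
  from jpos_props[OF this e] have "b < length js" "l < snd (js!b)"
     "g - length ks = sum_list (take b (map snd js)) + l" by auto
  then show ?thesis using False e by (auto simp: ix_def)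
qed

lemma ix_inj: "inj_on (ix ks js) {..<Ntot ks js}"
proof (rule inj_onI)
  fix g h assume g: "g \<in> {..<Ntot ks js}" and h: "h \<in> {..<Ntot ks js}" and e: "ix ks js g = ix ks js h"
  from ix_cases[of g ks js] ix_cases[of h ks js] g h e show "g = h" by auto
qed

lemma ix_image: "ix ks js ` {..<Ntot ks js} = Idx ks js"
proof
  show "ix ks js ` {..<Ntot ks js} \<subseteq> Idx ks js"
  proof
    fix x assume "x \<in> ix ks js ` {..<Ntot ks js}"
    then obtain g where g: "g < Ntot ks js" "x = ix ks js g" by auto
    from ix_cases[OF g(1)] g(2) show "x \<in> Idx ks js" by (auto simp: Idx_def)
  qed
next
  show "Idx ks js \<subseteq> ix ks js ` {..<Ntot ks js}"
  proof
    fix x assume x: "x \<in> Idx ks js"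
    show "x \<in> ix ks js ` {..<Ntot ks js}"
    proof (cases x)
      case (D a)
      with x have "a < length ks" by (auto simp: Idx_def)
      then show ?thesis using D by (auto simp: ix_def Ntot_def intro!: image_eqI[where x = a])
    next
      case (J b l)
      with x have bl: "b < length js" "l < snd (js!b)" by (auto simp: Idx_def)
      define g where "g = length ks + sum_list (take b (map snd js)) + l"
      have je: "jpos (map snd js) (g - length ks) = (b,l)" unfolding g_def using jpos_eq[of b "map snd js" l] bl by simp
      have "sum_list (take b (map snd js)) + l < sum_list (map snd js)"
      proof -
        have "sum_list (map snd js) = sum_list (take b (map snd js)) + sum_list (drop b (map snd js))"
          by (metis append_take_drop_id sum_list_append)
        moreover have "drop b (map snd js) = snd (js!b) # drop (Suc b) (map snd js)"
          using Cons_nth_drop_Suc[of b "map snd js"] bl by simp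
        ultimately show ?thesis using bl by simp
      qed
      then have "g < Ntot ks js" by (simp add: g_def Ntot_def)
      moreover have "ix ks js g = J b l" using je by (simp add: ix_def g_def)
      ultimately show ?thesis using J by (metis imageI lessThan_iff)
    qed
  qed
qed

lemma sum_ix:
  "(\<Sum>k<Ntot ks js. f (ix ks js k)) = (\<Sum>a<length ks. f (D a)) + (\<Sum>b<length js. \<Sum>l<snd (js!b). f (J b l))"
proof -
  have "(\<Sum>k<Ntot ks js. f (ix ks js k)) = sum f (Idx ks js)"
    using sum.reindex[OF ix_inj, of f] ix_image by simp
  also have "\<dots> = sum f (D ` {..<length ks}) + sum f ((\<lambda>(b,l). J b l) ` (SIGMA b:{..<length js}. {..<snd (js!b)}))"
    unfolding Idx_def by (rule sum.union_disjoint) auto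
  also have "sum f (D ` {..<length ks}) = (\<Sum>a<length ks. f (D a))"
    by (subst sum.reindex) (auto simp: inj_on_def)
  also have "sum f ((\<lambda>(b,l). J b l) ` (SIGMA b:{..<length js}. {..<snd (js!b)})) =
     (\<Sum>(b,l)\<in>(SIGMA b:{..<length js}. {..<snd (js!b)}). f (J b l))"
    by (subst sum.reindex) (auto simp: inj_on_def case_prod_beta)
  also have "\<dots> = (\<Sum>b<length js. \<Sum>l<snd (js!b). f (J b l))"
    by (subst sum.Sigma[symmetric]) auto
  finally show ?thesis .
qed

definition tm :: "(nat \<Rightarrow> complex) \<Rightarrow> (nat \<Rightarrow> nat \<Rightarrow> complex) \<Rightarrow> idx \<Rightarrow> idx \<Rightarrow> complex" where
  "tm d e x y = (case (x,y) of (D a, D a') \<Rightarrow> if a = a' then d a else 0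
     | (J b l, J b' t) \<Rightarrow> if b = b' \<and> t \<le> l then e b (l - t) else 0 | _ \<Rightarrow> 0)"

definition Tmat :: "complex list \<Rightarrow> (complex \<times> nat) list \<Rightarrow> (nat \<Rightarrow> complex) \<Rightarrow> (nat \<Rightarrow> nat \<Rightarrow> complex) \<Rightarrow> complex mat" where
  "Tmat ks js d e = mat (Ntot ks js) (Ntot ks js) (\<lambda>(g,h). tm d e (ix ks js g) (ix ks js h))"

definition conv :: "(nat \<Rightarrow> nat \<Rightarrow> complex) \<Rightarrow> (nat \<Rightarrow> nat \<Rightarrow> complex) \<Rightarrow> nat \<Rightarrow> nat \<Rightarrow> complex" where
  "conv e e' b k = (\<Sum>w\<le>k. e b (k - w) * e' b w)"

lemma conv_comm: "conv e e' = conv e' e"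
proof (intro ext)
  fix b k
  show "conv e e' b k = conv e' e b k" unfolding conv_def
    by (rule sum.reindex_bij_witness[where i="\<lambda>w. k - w" and j="\<lambda>w. k - w"]) (auto simp: mult.commute)
qed

lemma conv_aux:
  fixes f g :: "nat \<Rightarrow> complex"
  assumes "l0 < n" "t \<le> l0"
  shows "(\<Sum>l<n. (if l \<le> l0 then f (l0-l) else 0) * (if t \<le> l then g (l-t) else 0)) = (\<Sum>w\<le>l0-t. f (l0-t-w) * g w)"
proof -
  have "(\<Sum>l<n. (if l \<le> l0 then f (l0-l) else 0) * (if t \<le> l then g (l-t) else 0))
      = (\<Sum>l<n. if l \<in> {t..l0} then f (l0-l) * g (l-t) else 0)" by (rule sum.cong) auto
  also have "\<dots> = sum (\<lambda>l. f (l0-l) * g (l-t)) ({..<n} \<inter> {t..l0})"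
    by (simp add: sum.inter_restrict)
  also have "{..<n} \<inter> {t..l0} = {0+t..(l0-t)+t}" using assms by auto
  also have "sum (\<lambda>l. f (l0-l) * g (l-t)) {0+t..(l0-t)+t} = (\<Sum>w\<in>{0..l0-t}. f (l0-(w+t)) * g (w+t-t))"
    by (rule sum.shift_bounds_cl_nat_ivl)
  also have "\<dots> = (\<Sum>w\<le>l0-t. f (l0-t-w) * g w)" by (simp add: atLeast0AtMost diff_diff_add add.commute)
  finally show ?thesis .
qed

lemma conv_aux0:
  fixes f g :: "nat \<Rightarrow> complex"
  assumes "\<not> t \<le> l0"
  shows "(\<Sum>l<n. (if l \<le> l0 then f (l0-l) else 0) * (if t \<le> l then g (l-t) else 0)) = 0"
  using assms by (intro sum.neutral) auto

lemma sum_delta_nat: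
  fixes f :: "nat \<Rightarrow> complex"
  assumes "a < n"
  shows "(\<Sum>x<n. if x = a then f x else 0) = f a"
  using assms by (simp add: sum.delta)

lemma tm_prod:
  assumes x: "x \<in> Idx ks js" and y: "y \<in> Idx ks js"
  shows "(\<Sum>a<length ks. tm d e x (D a) * tm d' e' (D a) y) + (\<Sum>b<length js. \<Sum>l<snd (js!b). tm d e x (J b l) * tm d' e' (J b l) y)
    = tm (\<lambda>a. d a * d' a) (conv e e') x y"
proof (cases x)
  case (D a0)
  with x have a0: "a0 < length ks" by (auto simp: Idx_def)
  show ?thesis
  proof (cases y)
    case (D a1)
    have "(\<Sum>a<length ks. tm d e x (D a) * tm d' e' (D a) y) = (\<Sum>a<length ks. if a = a0 then (if a0 = a1 then d a0 * d' a0 else 0) else 0)"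
      by (rule sum.cong) (auto simp: tm_def \<open>x = D a0\<close> \<open>y = D a1\<close>)
    also have "\<dots> = (if a0 = a1 then d a0 * d' a0 else 0)" using a0 by (simp add: sum.delta)
    finally show ?thesis by (simp add: tm_def \<open>x = D a0\<close> \<open>y = D a1\<close>)
  next
    case (J b1 t)
    then show ?thesis using \<open>x = D a0\<close> by (simp add: tm_def)
  qed
next
  case (J b0 l0)
  with x have b0: "b0 < length js" "l0 < snd (js!b0)" by (auto simp: Idx_def)
  show ?thesis
  proof (cases y)
    case (D a1)
    then show ?thesis using \<open>x = J b0 l0\<close> by (simp add: tm_def)
  next
    case (J b1 t)
    have D0: "(\<Sum>a<length ks. tm d e x (D a) * tm d' e' (D a) y) = 0"
      by (simp add: tm_def \<open>x = J b0 l0\<close>)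
    have "(\<Sum>b<length js. \<Sum>l<snd (js!b). tm d e x (J b l) * tm d' e' (J b l) y)
      = (\<Sum>b<length js. if b = b0 then (if b0 = b1 then (\<Sum>l<snd (js!b0). (if l \<le> l0 then e b0 (l0-l) else 0) * (if t \<le> l then e' b0 (l-t) else 0)) else 0) else 0)"
      by (rule sum.cong) (auto simp: tm_def \<open>x = J b0 l0\<close> \<open>y = J b1 t\<close> intro!: sum.cong)
    also have "\<dots> = (if b0 = b1 then (\<Sum>l<snd (js!b0). (if l \<le> l0 then e b0 (l0-l) else 0) * (if t \<le> l then e' b0 (l-t) else 0)) else 0)"
      using b0 by (simp add: sum.delta)
    also have "\<dots> = tm (\<lambda>a. d a * d' a) (conv e e') x y"
      using conv_aux[OF b0(2), of t "e b0" "e' b0"] conv_aux0[of t l0 "e b0" "e' b0"]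
      by (auto simp: tm_def conv_def \<open>x = J b0 l0\<close> \<open>y = J b1 t\<close>)
    finally show ?thesis using D0 by simp
  qed
qed

lemma ix_Idx: "g < Ntot ks js \<Longrightarrow> ix ks js g \<in> Idx ks js"
  using ix_image by blast

lemma mat_ix_mult:
  "mat (Ntot ks js) (Ntot ks js) (\<lambda>(g,h). \<phi> (ix ks js g) (ix ks js h)) * mat (Ntot ks js) (Ntot ks js) (\<lambda>(g,h). \<psi> (ix ks js g) (ix ks js h))
   = mat (Ntot ks js) (Ntot ks js) (\<lambda>(g,h). (\<Sum>a<length ks. \<phi> (ix ks js g) (D a) * \<psi> (D a) (ix ks js h)) + (\<Sum>b<length js. \<Sum>l<snd (js!b). \<phi> (ix ks js g) (J b l) * \<psi> (J b l) (ix ks js h)))"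
proof (rule eq_matI)
  fix g h assume g: "g < dim_row (mat (Ntot ks js) (Ntot ks js) (\<lambda>(g,h). (\<Sum>a<length ks. \<phi> (ix ks js g) (D a) * \<psi> (D a) (ix ks js h)) + (\<Sum>b<length js. \<Sum>l<snd (js!b). \<phi> (ix ks js g) (J b l) * \<psi> (J b l) (ix ks js h))))"
     and h: "h < dim_col (mat (Ntot ks js) (Ntot ks js) (\<lambda>(g,h). (\<Sum>a<length ks. \<phi> (ix ks js g) (D a) * \<psi> (D a) (ix ks js h)) + (\<Sum>b<length js. \<Sum>l<snd (js!b). \<phi> (ix ks js g) (J b l) * \<psi> (J b l) (ix ks js h))))"
  then have g': "g < Ntot ks js" and h': "h < Ntot ks js" by auto
  have "(mat (Ntot ks js) (Ntot ks js) (\<lambda>(g,h). \<phi> (ix ks js g) (ix ks js h)) * mat (Ntot ks js) (Ntot ks js) (\<lambda>(g,h). \<psi> (ix ks js g) (ix ks js h))) $$ (g,h)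
     = (\<Sum>k<Ntot ks js. (\<lambda>z. \<phi> (ix ks js g) z * \<psi> z (ix ks js h)) (ix ks js k))"
    using g' h' by (simp add: scalar_prod_def lessThan_atLeast0)
  also have "\<dots> = (\<Sum>a<length ks. \<phi> (ix ks js g) (D a) * \<psi> (D a) (ix ks js h)) + (\<Sum>b<length js. \<Sum>l<snd (js!b). \<phi> (ix ks js g) (J b l) * \<psi> (J b l) (ix ks js h))"
    by (rule sum_ix)
  finally show "(mat (Ntot ks js) (Ntot ks js) (\<lambda>(g,h). \<phi> (ix ks js g) (ix ks js h)) * mat (Ntot ks js) (Ntot ks js) (\<lambda>(g,h). \<psi> (ix ks js g) (ix ks js h))) $$ (g,h) = mat (Ntot ks js) (Ntot ks js) (\<lambda>(g,h). (\<Sum>a<length ks. \<phi> (ix ks js g) (D a) * \<psi> (D a) (ix ks js h)) + (\<Sum>b<length js. \<Sum>l<snd (js!b). \<phi> (ix ks js g) (J b l) * \<psi> (J b l) (ix ks js h))) $$ (g,h)"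
    using g' h' by simp
qed auto

lemma Tmat_mult: "Tmat ks js d e * Tmat ks js d' e' = Tmat ks js (\<lambda>a. d a * d' a) (conv e e')"
  unfolding Tmat_def mat_ix_mult
  by (rule eq_matI) (auto simp: tm_prod ix_Idx)

lemma Tmat_carrier[simp]: "Tmat ks js d e \<in> carrier_mat (Ntot ks js) (Ntot ks js)"
  by (simp add: Tmat_def)

lemma Tmat_comm: "Tmat ks js d e * Tmat ks js d' e' = Tmat ks js d' e' * Tmat ks js d e"
  by (simp add: Tmat_mult conv_comm mult.commute)

lemma Tmat_cong:
  assumes "\<forall>a<length ks. d a = d' a" "\<forall>b<length js. \<forall>k. e b k = e' b k"
  shows "Tmat ks js d e = Tmat ks js d' e'"
proof (rule eq_matI)
  fix g h assume "g < dim_row (Tmat ks js d' e')" "h < dim_col (Tmat ks js d' e')"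
  then have g: "g < Ntot ks js" and h: "h < Ntot ks js" by (auto simp: Tmat_def)
  show "Tmat ks js d e $$ (g, h) = Tmat ks js d' e' $$ (g, h)"
    using ix_cases[OF g] ix_cases[OF h] g h assms by (auto simp: Tmat_def tm_def)
qed (auto simp: Tmat_def)

lemma tm_one: "tm (\<lambda>_. 1) (\<lambda>b k. if k = 0 then 1 else 0) x y = (if x = y then 1 else 0)"
  by (auto simp: tm_def split: idx.split)

lemma Tmat_one: "Tmat ks js (\<lambda>_. 1) (\<lambda>b k. if k = 0 then 1 else 0) = 1\<^sub>m (Ntot ks js)"
proof (rule eq_matI)
  fix g h assume "g < dim_row (1\<^sub>m (Ntot ks js))" "h < dim_col (1\<^sub>m (Ntot ks js) :: complex mat)"
  then have g: "g < Ntot ks js" and h: "h < Ntot ks js" by auto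
  have "ix ks js g = ix ks js h \<longleftrightarrow> g = h" using ix_inj[of ks js] g h by (auto simp: inj_on_def)
  then show "Tmat ks js (\<lambda>_. 1) (\<lambda>b k. if k = 0 then 1 else 0) $$ (g, h) = 1\<^sub>m (Ntot ks js) $$ (g, h)"
    using g h by (simp add: Tmat_def tm_one)
qed (auto simp: Tmat_def)

definition eG :: "(complex \<times> nat) list \<Rightarrow> nat \<Rightarrow> nat \<Rightarrow> complex" where
  "eG js b k = (if k = 0 then fst (js!b) else if k = 1 then 1 else 0)"

definition eV :: "(complex \<times> nat) list \<Rightarrow> nat \<Rightarrow> nat \<Rightarrow> complex" where
  "eV js b k = (-1)^k / fst (js!b)^(k+1)"

lemma Gam_Tmat: "Gam ks js = Tmat ks js (\<lambda>a. ks!a) (eG js)"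
proof (rule eq_matI)
  fix g h assume "g < dim_row (Tmat ks js (\<lambda>a. ks!a) (eG js))" "h < dim_col (Tmat ks js (\<lambda>a. ks!a) (eG js))"
  then have g: "g < Ntot ks js" and h: "h < Ntot ks js" by (auto simp: Tmat_def)
  show "Gam ks js $$ (g, h) = Tmat ks js (\<lambda>a. ks!a) (eG js) $$ (g, h)"
    using g h by (auto simp: Tmat_def Gam_def tm_def eG_def split: idx.split)
qed (auto simp: Tmat_def Gam_def)

lemma Amat_Tmat: "Amat ks js aJ = Tmat ks js (\<lambda>_. 1) (\<lambda>b k. aJ!b!k)"
  by (rule eq_matI) (auto simp: Tmat_def Amat_def tm_def split: idx.split)

lemma Fmat_Tmat: "Fmat ks js p q n m rho0 = Tmat ks js (\<lambda>a. rho p q n m rho0 (ks!a)) (\<lambda>b k. drho p q n m rho0 k (fst (js!b)))"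
  by (rule eq_matI) (auto simp: Tmat_def Fmat_def tm_def split: idx.split)

lemma conv_GV:
  fixes \<kappa> :: complex
  assumes "\<kappa> \<noteq> 0"
  shows "(\<Sum>w\<le>k. (if k - w = 0 then \<kappa> else if k - w = 1 then 1 else 0) * ((-1)^w / \<kappa>^(w+1))) = (if k = 0 then 1 else 0)"
proof (cases k)
  case 0 then show ?thesis using assms by simp
next
  case (Suc k')
  have "(\<Sum>w\<le>k'. (if Suc k' - w = 0 then \<kappa> else if Suc k' - w = 1 then 1 else 0) * ((-1)^w / \<kappa>^(w+1)))
      = (\<Sum>w\<le>k'. if w = k' then (-1)^w / \<kappa>^(w+1) else 0)"
    by (rule sum.cong) auto
  also have "\<dots> = (-1)^k' / \<kappa>^(k'+1)" by (simp add: sum.delta)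
  finally have s: "(\<Sum>w\<le>k'. (if Suc k' - w = 0 then \<kappa> else if Suc k' - w = 1 then 1 else 0) * ((-1)^w / \<kappa>^(w+1))) = (-1)^k' / \<kappa>^(k'+1)" .
  show ?thesis unfolding Suc sum.atMost_Suc s using assms by (simp add: field_simps)
qed

lemma GV_one:
  assumes "\<forall>a<length ks. ks!a \<noteq> 0" "\<forall>b<length js. fst (js!b) \<noteq> 0"
  shows "Tmat ks js (\<lambda>a. ks!a) (eG js) * Tmat ks js (\<lambda>a. 1 / ks!a) (eV js) = 1\<^sub>m (Ntot ks js)"
  unfolding Tmat_mult Tmat_one[symmetric]
proof (rule Tmat_cong)
  show "\<forall>a<length ks. ks ! a * (1 / ks ! a) = 1" using assms by simp
  show "\<forall>b<length js. \<forall>k. conv (eG js) (eV js) b k = (if k = 0 then 1 else 0)"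
  proof (intro allI impI)
    fix b k assume b: "b < length js"
    have "conv (eG js) (eV js) b k = (\<Sum>w\<le>k. (if k - w = 0 then fst (js!b) else if k - w = 1 then 1 else 0) * ((-1)^w / fst (js!b)^(w+1)))"
      by (simp only: conv_def eG_def eV_def)
    also have "\<dots> = (if k = 0 then 1 else 0)" using assms b by (intro conv_GV) auto
    finally show "conv (eG js) (eV js) b k = (if k = 0 then 1 else 0)" .
  qed
qed

lemma minv_eq:
  fixes A V :: "complex mat"
  assumes A: "A \<in> carrier_mat N N" and V: "V \<in> carrier_mat N N" and AV: "A * V = 1\<^sub>m N" and VA: "V * A = 1\<^sub>m N"
  shows "minv A = V"
proof -
  have ex: "\<exists>B. inverts_mat A B \<and> inverts_mat B A"
    using A V AV VA by (auto simp: inverts_mat_def intro!: exI[of _ V])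
  define B where "B = minv A"
  have Bp: "inverts_mat A B \<and> inverts_mat B A" unfolding B_def minv_def by (rule someI_ex[OF ex])
  then have AB: "A * B = 1\<^sub>m N" and BA: "B * A = 1\<^sub>m (dim_row B)" using A by (auto simp: inverts_mat_def)
  have "dim_col B = N" using arg_cong[OF AB, of dim_col] by simp
  moreover have "dim_row B = N" using arg_cong[OF BA, of dim_col] A by simp
  ultimately have B: "B \<in> carrier_mat N N" by auto
  have "B = B * (A * V)" using AV B by simp
  also have "\<dots> = (B * A) * V" using A B V by simp
  also have "\<dots> = V" using BA B V by simp
  finally show ?thesis by (simp add: B_def)
qed

lemma Tmat_pow: "\<exists>d' e'. Tmat ks js d e ^\<^sub>m k = Tmat ks js d' e'"
proof (induction k)
  case 0 then show ?case using Tmat_one[of ks js, symmetric] by (auto simp: Tmat_def)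
next
  case (Suc k)
  then obtain d' e' where "Tmat ks js d e ^\<^sub>m k = Tmat ks js d' e'" by blast
  then show ?case by (auto simp: Tmat_mult)
qed

definition hm :: "(complex \<times> nat) list \<Rightarrow> complex list \<Rightarrow> complex list list \<Rightarrow> idx \<Rightarrow> idx \<Rightarrow> complex" where
  "hm js cD cJ x y = (case (x,y) of (D a, D a') \<Rightarrow> if a = a' then cD!a else 0
     | (J b l, J b' t) \<Rightarrow> if b = b' \<and> l + t + 1 \<le> snd (js!b) then cJ!b!(l+t) else 0 | _ \<Rightarrow> 0)"

lemma Hmat_hm: "Hmat ks js cD cJ = mat (Ntot ks js) (Ntot ks js) (\<lambda>(g,h). hm js cD cJ (ix ks js g) (ix ks js h))"
  by (rule eq_matI) (auto simp: Hmat_def hm_def split: idx.split)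

definition hsym :: "(complex \<times> nat) list \<Rightarrow> complex list \<Rightarrow> complex list list \<Rightarrow> (nat \<Rightarrow> complex) \<Rightarrow> (nat \<Rightarrow> nat \<Rightarrow> complex) \<Rightarrow> idx \<Rightarrow> idx \<Rightarrow> complex" where
  "hsym js cD cJ d e x y = (case (x,y) of (D a, D a') \<Rightarrow> if a = a' then cD!a * d a else 0
     | (J b l, J b' t) \<Rightarrow> if b = b' then (\<Sum>v<snd (js!b). if l+t+v+1 \<le> snd (js!b) then cJ!b!(l+t+v) * e b v else 0) else 0
     | _ \<Rightarrow> 0)"

lemma hsym_sym: "hsym js cD cJ d e x y = hsym js cD cJ d e y x"
proof (cases x; cases y)
  fix b l b' t assume "x = J b l" "y = J b' t"
  then show ?thesis by (cases "b = b'") (simp_all add: hsym_def add.commute[of l t] cong: if_cong)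
qed (auto simp: hsym_def)

lemma hank_aux:
  fixes c e :: "nat \<Rightarrow> complex"
  shows "(\<Sum>u<N. (if l+u+1 \<le> N then c (l+u) else 0) * (if t \<le> u then e (u-t) else 0))
     = (\<Sum>v<N. if l+t+v+1 \<le> N then c (l+t+v) * e v else 0)"
proof -
  have "(\<Sum>u<N. (if l+u+1 \<le> N then c (l+u) else 0) * (if t \<le> u then e (u-t) else 0))
     = (\<Sum>u<N. if u \<in> {t..<N} then (if l+u+1 \<le> N then c (l+u) * e (u-t) else 0) else 0)"
    by (rule sum.cong) auto
  also have "\<dots> = sum (\<lambda>u. if l+u+1 \<le> N then c (l+u) * e (u-t) else 0) ({..<N} \<inter> {t..<N})"
    by (rule sum.inter_restrict[symmetric]) simp
  also have "{..<N} \<inter> {t..<N} = {0+t..<(N-t)+t}" by auto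
  also have "sum (\<lambda>u. if l+u+1 \<le> N then c (l+u) * e (u-t) else 0) {0+t..<(N-t)+t}
      = (\<Sum>v\<in>{0..<N-t}. if l+(v+t)+1 \<le> N then c (l+(v+t)) * e (v+t-t) else 0)"
    by (rule sum.shift_bounds_nat_ivl)
  also have "\<dots> = (\<Sum>v<N-t. if l+t+v+1 \<le> N then c (l+t+v) * e v else 0)"
  proof -
    have r: "\<And>v. l+(v+t) = l+t+v" "\<And>v. v+t-t = v" by simp_all
    show ?thesis by (simp only: r lessThan_atLeast0)
  qed
  also have "\<dots> = (\<Sum>v<N. if l+t+v+1 \<le> N then c (l+t+v) * e v else 0)"
    by (rule sum.mono_neutral_cong_left) auto
  finally show ?thesis .
qed

lemma HT_entry:
  assumes x: "x \<in> Idx ks js" and y: "y \<in> Idx ks js"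
  shows "(\<Sum>a<length ks. hm js cD cJ x (D a) * tm d e (D a) y) + (\<Sum>b<length js. \<Sum>l<snd (js!b). hm js cD cJ x (J b l) * tm d e (J b l) y)
    = hsym js cD cJ d e x y"
proof (cases x)
  case (D a0)
  with x have a0: "a0 < length ks" by (auto simp: Idx_def)
  show ?thesis
  proof (cases y)
    case (D a1)
    have "(\<Sum>a<length ks. hm js cD cJ x (D a) * tm d e (D a) y) = (\<Sum>a<length ks. if a = a0 then (if a0 = a1 then cD!a0 * d a0 else 0) else 0)"
      by (rule sum.cong) (auto simp: tm_def hm_def \<open>x = D a0\<close> \<open>y = D a1\<close>)
    also have "\<dots> = (if a0 = a1 then cD!a0 * d a0 else 0)" using a0 by (simp add: sum.delta)
    finally show ?thesis by (simp add: tm_def hm_def hsym_def \<open>x = D a0\<close> \<open>y = D a1\<close>)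
  next
    case (J b1 t)
    then show ?thesis using \<open>x = D a0\<close> by (simp add: tm_def hm_def hsym_def)
  qed
next
  case (J b0 l0)
  with x have b0: "b0 < length js" "l0 < snd (js!b0)" by (auto simp: Idx_def)
  show ?thesis
  proof (cases y)
    case (D a1)
    then show ?thesis using \<open>x = J b0 l0\<close> by (simp add: tm_def hm_def hsym_def)
  next
    case (J b1 t)
    have D0: "(\<Sum>a<length ks. hm js cD cJ x (D a) * tm d e (D a) y) = 0"
      by (simp add: hm_def \<open>x = J b0 l0\<close>)
    have "(\<Sum>b<length js. \<Sum>l<snd (js!b). hm js cD cJ x (J b l) * tm d e (J b l) y)
      = (\<Sum>b<length js. if b = b0 then (if b0 = b1 then (\<Sum>u<snd (js!b0). (if l0+u+1 \<le> snd (js!b0) then cJ!b0!(l0+u) else 0) * (if t \<le> u then e b0 (u-t) else 0)) else 0) else 0)"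
      by (rule sum.cong) (auto simp: tm_def hm_def \<open>x = J b0 l0\<close> \<open>y = J b1 t\<close> intro!: sum.cong)
    also have "\<dots> = (if b0 = b1 then (\<Sum>u<snd (js!b0). (if l0+u+1 \<le> snd (js!b0) then cJ!b0!(l0+u) else 0) * (if t \<le> u then e b0 (u-t) else 0)) else 0)"
      using b0 by (simp add: sum.delta)
    also have "\<dots> = hsym js cD cJ d e x y"
      using hank_aux[of l0 "snd (js!b0)" "\<lambda>i. cJ!b0!i" t "e b0"]
      by (auto simp: hsym_def \<open>x = J b0 l0\<close> \<open>y = J b1 t\<close>)
    finally show ?thesis using D0 by simp
  qed
qed

lemma HT_sym: "transpose_mat (Hmat ks js cD cJ * Tmat ks js d e) = Hmat ks js cD cJ * Tmat ks js d e"
proof -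
  have eq: "Hmat ks js cD cJ * Tmat ks js d e = mat (Ntot ks js) (Ntot ks js) (\<lambda>(g,h). hsym js cD cJ d e (ix ks js g) (ix ks js h))"
    unfolding Hmat_hm Tmat_def mat_ix_mult
    by (rule eq_matI) (auto simp: HT_entry ix_Idx)
  show ?thesis unfolding eq by (rule eq_matI) (auto simp: hsym_sym)
qed

lemma H_sym: "transpose_mat (Hmat ks js cD cJ) = Hmat ks js cD cJ"
  by (rule eq_matI) (auto simp: Hmat_def add.commute split: idx.split)

lemma choose_sym_aux: "(l + t) choose l = (l + t) choose t"
  by (metis binomial_symmetric le_add1 add_diff_cancel_left')

lemma G_sym: "transpose_mat (Gmat ks js) = Gmat ks js"
  apply (rule eq_matI)
  apply (auto simp: Gmat_def add.commute split: idx.split)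
  apply (metis choose_sym_aux)
  done

lemmas NN = assoc_mult_mat[of _ N N _ N _ N] mult_carrier_mat[of _ N N _ N] assoc_mult_mat_vec[of _ N N _ N]
  mult_mat_vec_carrier[of _ N N] add_mult_distrib_mat[of _ N N _ _ N] mult_add_distrib_mat[of _ N N _ N]
  for N

lemma Y_sym:
  fixes H F G X :: "complex mat"
  assumes c: "H \<in> carrier_mat N N" "F \<in> carrier_mat N N" "G \<in> carrier_mat N N" "X \<in> carrier_mat N N"
  and Hs: "transpose_mat H = H" and Gs: "transpose_mat G = G" and HFs: "transpose_mat (H*F) = H*F"
  and X2: "(1\<^sub>m N + F*G*H) * X = 1\<^sub>m N"
  shows "transpose_mat (H*X*F) = H*X*F"
proof -
  define Y where "Y = H*X*F"
  define P where "P = H*F"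
  define Q where "Q = transpose_mat Y"
  have cY: "Y \<in> carrier_mat N N" and cP: "P \<in> carrier_mat N N" and cQ: "Q \<in> carrier_mat N N"
    using c by (auto simp: Y_def P_def Q_def)
  have X2': "X + F*(G*(H*X)) = 1\<^sub>m N"
    using X2 c by (simp add: NN[where N=N])
  have e1: "Y + P*G*Y = P"
  proof -
    have "Y + P*G*Y = H*((X + F*(G*(H*X)))*F)"
      using c by (simp add: Y_def P_def NN[where N=N])
    also have "\<dots> = P" using c by (simp add: X2' P_def)
    finally show ?thesis .
  qed
  have Ps: "transpose_mat P = P" using HFs by (simp add: P_def)
  have e2: "Q + Q*G*P = P"
  proof -
    have "transpose_mat (Y + P*G*Y) = Q + Q*G*P"
      using cY cP c Ps Gs by (simp add: Q_def transpose_add transpose_mult[of _ N N _ N])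
    then show ?thesis using e1 Ps by simp
  qed
  have e3: "Q*G*Y + Q*G*P*G*Y = P*G*Y"
  proof -
    have "(Q + Q*G*P)*(G*Y) = P*G*Y" using e2 c cY cP by (simp add: NN[where N=N])
    moreover have "(Q + Q*G*P)*(G*Y) = Q*G*Y + Q*G*P*G*Y"
      using c cY cP cQ by (simp add: NN[where N=N])
    ultimately show ?thesis by simp
  qed
  have e4: "Q*G*Y + Q*G*P*G*Y = Q*G*P"
  proof -
    have "(Q*G)*(Y + P*G*Y) = Q*G*P" using e1 by simp
    moreover have "(Q*G)*(Y + P*G*Y) = Q*G*Y + Q*G*P*G*Y"
      using c cY cP cQ by (simp add: NN[where N=N])
    ultimately show ?thesis by simp
  qed
  have e5: "P*G*Y = Q*G*P" using e3 e4 by simp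
  have "Y + P*G*Y = Q + P*G*Y" using e1 e2 e5 by simp
  then have "Y = Q"
  proof -
    assume h: "Y + P*G*Y = Q + P*G*Y"
    show "Y = Q"
    proof (rule eq_matI)
      fix i j assume ij: "i < dim_row Q" "j < dim_col Q"
      have "(Y + P*G*Y) $$ (i,j) = (Q + P*G*Y) $$ (i,j)" using h by simp
      then show "Y $$ (i,j) = Q $$ (i,j)" using ij cY cQ c cP by simp
    qed (use cY cQ in auto)
  qed
  then show ?thesis by (simp add: Q_def Y_def)
qed

lemma quad_form:
  fixes H F G X A B Y :: "complex mat" and v :: "complex vec"
  assumes c: "H \<in> carrier_mat N N" "F \<in> carrier_mat N N" "X \<in> carrier_mat N N" "A \<in> carrier_mat N N" "B \<in> carrier_mat N N"
    and v: "v \<in> carrier_vec N"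
    and Hs: "transpose_mat H = H"
    and HA: "H * A = transpose_mat A * H" and BF: "B * F = F * B"
  shows "(H *\<^sub>v v) \<bullet> (A * X * B *\<^sub>v (F *\<^sub>v v)) = (A *\<^sub>v v) \<bullet> ((H*X*F) *\<^sub>v (B *\<^sub>v v))"
proof -
  have "(H *\<^sub>v v) \<bullet> (A * X * B *\<^sub>v (F *\<^sub>v v)) = (transpose_mat H *\<^sub>v v) \<bullet> (A * X * B *\<^sub>v (F *\<^sub>v v))"
    using Hs by simp
  also have "\<dots> = v \<bullet> (H *\<^sub>v (A * X * B *\<^sub>v (F *\<^sub>v v)))"
    by (rule transpose_vec_mult_scalar[OF c(1)]) (use c v in \<open>auto intro!: mult_mat_vec_carrier mult_carrier_mat\<close>)
  also have "H *\<^sub>v (A * X * B *\<^sub>v (F *\<^sub>v v)) = (H * A) * X * (B * F) *\<^sub>v v"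
    using c v by (simp add: NN[where N=N])
  also have "\<dots> = transpose_mat A * ((H * X * F) * B) *\<^sub>v v"
    using c v by (simp add: HA BF NN[where N=N])
  also have "\<dots> = transpose_mat A *\<^sub>v ((H * X * F) *\<^sub>v (B *\<^sub>v v))"
    using c v by (simp add: NN[where N=N])
  also have "v \<bullet> \<dots> = (A *\<^sub>v v) \<bullet> ((H * X * F) *\<^sub>v (B *\<^sub>v v))"
  proof -
    have "(transpose_mat (transpose_mat A) *\<^sub>v v) \<bullet> ((H * X * F) *\<^sub>v (B *\<^sub>v v)) = v \<bullet> (transpose_mat A *\<^sub>v ((H * X * F) *\<^sub>v (B *\<^sub>v v)))"
      by (rule transpose_vec_mult_scalar[of _ N N]) (use c v in \<open>auto simp: NN[where N=N]\<close>)
    then show ?thesis by simp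
  qed
  finally show ?thesis .
qed

lemma sym_bilin:
  fixes Y :: "complex mat" and u w :: "complex vec"
  assumes "Y \<in> carrier_mat N N" "u \<in> carrier_vec N" "w \<in> carrier_vec N" "transpose_mat Y = Y"
  shows "u \<bullet> (Y *\<^sub>v w) = w \<bullet> (Y *\<^sub>v u)"
proof -
  have "u \<bullet> (Y *\<^sub>v w) = (transpose_mat Y *\<^sub>v u) \<bullet> w"
    by (rule transpose_vec_mult_scalar[symmetric]) (use assms in auto)
  also have "\<dots> = w \<bullet> (transpose_mat Y *\<^sub>v u)"
    by (rule comm_scalar_prod[of _ N]) (use assms in auto)
  finally show ?thesis using assms by simp
qed

definition epsf :: "idx \<Rightarrow> complex" where
  "epsf x = (case x of D a \<Rightarrow> 1 | J b l \<Rightarrow> if l = 0 then 1 else 0)"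

definition epsv :: "complex list \<Rightarrow> (complex \<times> nat) list \<Rightarrow> complex vec" where
  "epsv ks js = vec (Ntot ks js) (\<lambda>g. epsf (ix ks js g))"

lemma mat_ix_mult_vec:
  "mat (Ntot ks js) (Ntot ks js) (\<lambda>(g,h). \<phi> (ix ks js g) (ix ks js h)) *\<^sub>v vec (Ntot ks js) (\<lambda>g. \<psi> (ix ks js g))
   = vec (Ntot ks js) (\<lambda>g. (\<Sum>a<length ks. \<phi> (ix ks js g) (D a) * \<psi> (D a)) + (\<Sum>b<length js. \<Sum>l<snd (js!b). \<phi> (ix ks js g) (J b l) * \<psi> (J b l)))"
proof (rule eq_vecI, goal_cases)
  case (1 g)
  then have g: "g < Ntot ks js" by simp
  have "(mat (Ntot ks js) (Ntot ks js) (\<lambda>(g,h). \<phi> (ix ks js g) (ix ks js h)) *\<^sub>v vec (Ntot ks js) (\<lambda>g. \<psi> (ix ks js g))) $ g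
     = (\<Sum>k<Ntot ks js. (\<lambda>z. \<phi> (ix ks js g) z * \<psi> z) (ix ks js k))"
    using g by (simp add: scalar_prod_def lessThan_atLeast0)
  also have "\<dots> = (\<Sum>a<length ks. \<phi> (ix ks js g) (D a) * \<psi> (D a)) + (\<Sum>b<length js. \<Sum>l<snd (js!b). \<phi> (ix ks js g) (J b l) * \<psi> (J b l))"
    by (rule sum_ix)
  finally show ?case using g by simp
qed auto

lemma sum_at0:
  fixes f :: "nat \<Rightarrow> complex"
  assumes "0 < N"
  shows "(\<Sum>l<N. f l * (if l = 0 then 1 else 0)) = f 0"
proof -
  have "(\<Sum>l<N. f l * (if l = 0 then 1 else 0)) = (\<Sum>l<N. if l = 0 then f l else 0)" by (rule sum.cong) auto
  then show ?thesis using assms by (simp add: sum.delta)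
qed

lemma tm_eps:
  assumes x: "x \<in> Idx ks js"
  shows "(\<Sum>a<length ks. tm d e x (D a) * epsf (D a)) + (\<Sum>b<length js. \<Sum>l<snd (js!b). tm d e x (J b l) * epsf (J b l))
    = (case x of D a \<Rightarrow> d a | J b l \<Rightarrow> e b l)"
proof (cases x)
  case (D a0)
  with x have a0: "a0 < length ks" by (auto simp: Idx_def)
  have "(\<Sum>a<length ks. tm d e x (D a) * epsf (D a)) = (\<Sum>a<length ks. if a = a0 then d a0 else 0)"
    by (rule sum.cong) (auto simp: tm_def epsf_def D)
  also have "\<dots> = d a0" using a0 by (simp add: sum.delta)
  finally show ?thesis by (simp add: D tm_def)
next
  case (J b0 l0)
  with x have b0: "b0 < length js" "l0 < snd (js!b0)" by (auto simp: Idx_def)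
  have "(\<Sum>b<length js. \<Sum>l<snd (js!b). tm d e x (J b l) * epsf (J b l))
      = (\<Sum>b<length js. if b = b0 then (\<Sum>l<snd (js!b0). (if l \<le> l0 then e b0 (l0-l) else 0) * (if l = 0 then 1 else 0)) else 0)"
    by (rule sum.cong) (auto simp: tm_def epsf_def J)
  also have "\<dots> = (\<Sum>l<snd (js!b0). (if l \<le> l0 then e b0 (l0-l) else 0) * (if l = 0 then 1 else 0))" using b0 by (simp add: sum.delta)
  also have "\<dots> = e b0 l0" using b0 sum_at0[of "snd (js!b0)" "\<lambda>l. (if l \<le> l0 then e b0 (l0-l) else 0)"] by simp
  finally show ?thesis by (simp add: J tm_def)
qed

lemma hm_eps:
  assumes x: "x \<in> Idx ks js"
  shows "(\<Sum>a<length ks. hm js cD cJ x (D a) * epsf (D a)) + (\<Sum>b<length js. \<Sum>l<snd (js!b). hm js cD cJ x (J b l) * epsf (J b l))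
    = (case x of D a \<Rightarrow> cD!a | J b l \<Rightarrow> cJ!b!l)"
proof (cases x)
  case (D a0)
  with x have a0: "a0 < length ks" by (auto simp: Idx_def)
  have "(\<Sum>a<length ks. hm js cD cJ x (D a) * epsf (D a)) = (\<Sum>a<length ks. if a = a0 then cD!a0 else 0)"
    by (rule sum.cong) (auto simp: hm_def epsf_def D)
  also have "\<dots> = cD!a0" using a0 by (simp add: sum.delta)
  finally show ?thesis by (simp add: D hm_def)
next
  case (J b0 l0)
  with x have b0: "b0 < length js" "l0 < snd (js!b0)" by (auto simp: Idx_def)
  have "(\<Sum>b<length js. \<Sum>l<snd (js!b). hm js cD cJ x (J b l) * epsf (J b l))
      = (\<Sum>b<length js. if b = b0 then (\<Sum>l<snd (js!b0). (if l0 + l + 1 \<le> snd (js!b0) then cJ!b0!(l0+l) else 0) * (if l = 0 then 1 else 0)) else 0)"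
    by (rule sum.cong) (auto simp: hm_def epsf_def J)
  also have "\<dots> = (\<Sum>l<snd (js!b0). (if l0 + l + 1 \<le> snd (js!b0) then cJ!b0!(l0+l) else 0) * (if l = 0 then 1 else 0))" using b0 by (simp add: sum.delta)
  also have "\<dots> = cJ!b0!l0" using b0 sum_at0[of "snd (js!b0)" "\<lambda>l. (if l0 + l + 1 \<le> snd (js!b0) then cJ!b0!(l0+l) else 0)"] by simp
  finally show ?thesis by (simp add: J hm_def)
qed

lemma rvec_eps: "rvec ks js p q n m rho0 = Fmat ks js p q n m rho0 *\<^sub>v epsv ks js"
  unfolding Fmat_Tmat Tmat_def epsv_def mat_ix_mult_vec
  by (rule eq_vecI) (auto simp: rvec_def tm_eps ix_Idx split: idx.split)

lemma cvec_eps: "cvec ks js cD cJ = Hmat ks js cD cJ *\<^sub>v epsv ks js"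
  unfolding Hmat_hm epsv_def mat_ix_mult_vec
  by (rule eq_vecI) (auto simp: cvec_def hm_eps ix_Idx split: idx.split)

lemma minv_inv:
  fixes A :: "complex mat"
  assumes A: "A \<in> carrier_mat N N" and inv: "invertible_mat A"
  shows "minv A \<in> carrier_mat N N \<and> A * minv A = 1\<^sub>m N \<and> minv A * A = 1\<^sub>m N"
proof -
  obtain B where AB': "inverts_mat A B" and BA': "inverts_mat B A" using inv by (auto simp: invertible_mat_def)
  then have AB: "A * B = 1\<^sub>m N" and BA: "B * A = 1\<^sub>m (dim_row B)" using A by (auto simp: inverts_mat_def)
  have "dim_col B = N" using arg_cong[OF AB, of dim_col] by simp
  moreover have "dim_row B = N" using arg_cong[OF BA, of dim_col] A by simp
  ultimately have B: "B \<in> carrier_mat N N" by auto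
  have "minv A = B" using minv_eq[OF A B AB] BA B by simp
  then show ?thesis using B AB BA by simp
qed

lemma mpowi_Tmat:
  assumes "\<forall>a<length ks. ks!a \<noteq> 0" "\<forall>b<length js. fst (js!b) \<noteq> 0"
  shows "\<exists>d e. mpowi (Gam ks js) i = Tmat ks js d e"
proof -
  have GV: "Tmat ks js (\<lambda>a. ks!a) (eG js) * Tmat ks js (\<lambda>a. 1 / ks!a) (eV js) = 1\<^sub>m (Ntot ks js)"
    by (rule GV_one[OF assms])
  have VG: "Tmat ks js (\<lambda>a. 1 / ks!a) (eV js) * Tmat ks js (\<lambda>a. ks!a) (eG js) = 1\<^sub>m (Ntot ks js)"
    using GV Tmat_comm by metis
  have mi: "minv (Gam ks js) = Tmat ks js (\<lambda>a. 1 / ks!a) (eV js)"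
    unfolding Gam_Tmat by (rule minv_eq[OF Tmat_carrier Tmat_carrier GV VG])
  show ?thesis
    unfolding mpowi_def mi by (cases "0 \<le> i") (auto simp: Gam_Tmat Tmat_pow)
qed

theorem theorem4:
  fixes ks :: "complex list" and js :: "(complex \<times> nat) list"
    and cD :: "complex list" and cJ :: "complex list list" and aJ :: "complex list list"
    and p q rho0 :: complex and n m :: int
  defines "N \<equiv> Ntot ks js"
    and "\<Gamma> \<equiv> Gam ks js"
    and "c \<equiv> cvec ks js cD cJ"
    and "r' \<equiv> Amat ks js aJ *\<^sub>v rvec ks js p q n m rho0"
    and "M' \<equiv> Amat ks js aJ * Mmat ks js p q n m rho0 cD cJ"
  assumes eig_sum: "\<forall>x\<in>set ks \<union> fst ` set js. \<forall>y\<in>set ks \<union> fst ` set js. x + y \<noteq> 0"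
    and pq: "\<forall>x\<in>set ks \<union> fst ` set js. p \<noteq> x \<and> p \<noteq> - x \<and> q \<noteq> x \<and> q \<noteq> - x"
    and len_cD: "length cD = length ks"
    and len_cJ: "length cJ = length js" "\<forall>b < length js. length (cJ ! b) = snd (js ! b)"
    and len_aJ: "length aJ = length js" "\<forall>b < length js. length (aJ ! b) = snd (js ! b)"
    and inv: "invertible_mat (1\<^sub>m N + M')"
  shows "\<forall>i j :: int.
           c \<bullet> (mpowi \<Gamma> j * minv (1\<^sub>m N + M') * mpowi \<Gamma> i *\<^sub>v r')
         = c \<bullet> (mpowi \<Gamma> i * minv (1\<^sub>m N + M') * mpowi \<Gamma> j *\<^sub>v r')"
proof -
  have nzk: "\<forall>a<length ks. ks!a \<noteq> 0"
  proof (intro allI impI)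
    fix a assume "a < length ks"
    then have "ks!a \<in> set ks \<union> fst ` set js" by simp
    with eig_sum have "ks!a + ks!a \<noteq> 0" by blast
    then show "ks!a \<noteq> 0" by auto
  qed
  have nzj: "\<forall>b<length js. fst (js!b) \<noteq> 0"
  proof (intro allI impI)
    fix b assume "b < length js"
    then have "fst (js!b) \<in> set ks \<union> fst ` set js" by simp
    with eig_sum have "fst (js!b) + fst (js!b) \<noteq> 0" by blast
    then show "fst (js!b) \<noteq> 0" by auto
  qed
  define A where "A = Amat ks js aJ"
  define F where "F = Fmat ks js p q n m rho0"
  define G where "G = Gmat ks js"
  define H where "H = Hmat ks js cD cJ"
  define e where "e = epsv ks js"
  define F' where "F' = A * F"
  obtain dF eF where F'T: "F' = Tmat ks js dF eF"
    unfolding F'_def A_def F_def Amat_Tmat Fmat_Tmat Tmat_mult by blast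
  have cA: "A \<in> carrier_mat N N" and cF: "F \<in> carrier_mat N N" and cG: "G \<in> carrier_mat N N"
    and cH: "H \<in> carrier_mat N N" and ce: "e \<in> carrier_vec N" and cF': "F' \<in> carrier_mat N N"
    by (auto simp: N_def A_def F_def G_def H_def e_def F'T Amat_def Fmat_def Gmat_def Hmat_def epsv_def)
  have M'eq: "M' = F' * G * H"
    using cA cF cG cH by (simp add: M'_def Mmat_def A_def F_def G_def H_def F'_def NN[where N=N])
  have r'eq: "r' = F' *\<^sub>v e"
    using cA cF ce by (simp add: r'_def rvec_eps A_def F_def e_def F'_def NN[where N=N])
  have ceq: "c = H *\<^sub>v e" by (simp add: c_def cvec_eps H_def e_def)
  have cM: "1\<^sub>m N + M' \<in> carrier_mat N N" using cF' cG cH M'eq by (simp add: NN[where N=N])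
  define X where "X = minv (1\<^sub>m N + M')"
  from minv_inv[OF cM inv] have cX: "X \<in> carrier_mat N N" and X2: "(1\<^sub>m N + F' * G * H) * X = 1\<^sub>m N"
    by (auto simp: X_def M'eq)
  have Hs: "transpose_mat H = H" by (simp add: H_def H_sym)
  have Gs: "transpose_mat G = G" by (simp add: G_def G_sym)
  have HF's: "transpose_mat (H * F') = H * F'" by (simp add: H_def F'T HT_sym)
  have Ys: "transpose_mat (H * X * F') = H * X * F'" by (rule Y_sym[OF cH cF' cG cX Hs Gs HF's X2])
  have cY: "H * X * F' \<in> carrier_mat N N" using cH cX cF' by (simp add: NN[where N=N])
  have key: "\<And>Pa Pb. Pa \<in> {mpowi \<Gamma> k | k. True} \<Longrightarrow> Pb \<in> {mpowi \<Gamma> k | k. True} \<Longrightarrow>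
      c \<bullet> (Pa * minv (1\<^sub>m N + M') * Pb *\<^sub>v r') = (Pa *\<^sub>v e) \<bullet> ((H * X * F') *\<^sub>v (Pb *\<^sub>v e))"
  proof -
    fix Pa Pb assume a: "Pa \<in> {mpowi \<Gamma> k | k. True}" and b: "Pb \<in> {mpowi \<Gamma> k | k. True}"
    from a obtain ka where ka: "Pa = mpowi \<Gamma> ka" by blast
    have "\<exists>d e. Pa = Tmat ks js d e" using ka mpowi_Tmat[OF nzk nzj, of ka] by (simp add: \<Gamma>_def)
    then obtain da ea where PaT: "Pa = Tmat ks js da ea" by blast
    from b obtain kb where kb: "Pb = mpowi \<Gamma> kb" by blast
    have "\<exists>d e. Pb = Tmat ks js d e" using kb mpowi_Tmat[OF nzk nzj, of kb] by (simp add: \<Gamma>_def)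
    then obtain db eb where PbT: "Pb = Tmat ks js db eb" by blast
    have cPa: "Pa \<in> carrier_mat N N" and cPb: "Pb \<in> carrier_mat N N" by (simp_all add: PaT PbT N_def)
    have HPa: "H * Pa = transpose_mat Pa * H"
    proof -
      have "H * Pa = transpose_mat (H * Pa)" by (simp add: H_def PaT HT_sym)
      also have "\<dots> = transpose_mat Pa * transpose_mat H" by (rule transpose_mult[OF cH cPa])
      finally show ?thesis using Hs by simp
    qed
    have PbF: "Pb * F' = F' * Pb" by (simp add: PbT F'T Tmat_comm)
    show "c \<bullet> (Pa * minv (1\<^sub>m N + M') * Pb *\<^sub>v r') = (Pa *\<^sub>v e) \<bullet> ((H * X * F') *\<^sub>v (Pb *\<^sub>v e))"
      unfolding ceq r'eq X_def[symmetric]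
      by (rule quad_form[OF cH cF' cX cPa cPb ce Hs HPa PbF])
  qed
  show ?thesis
  proof (intro allI)
    fix i j :: int
    have "c \<bullet> (mpowi \<Gamma> j * minv (1\<^sub>m N + M') * mpowi \<Gamma> i *\<^sub>v r') = (mpowi \<Gamma> j *\<^sub>v e) \<bullet> ((H * X * F') *\<^sub>v (mpowi \<Gamma> i *\<^sub>v e))"
      by (rule key) auto
    also have "\<dots> = (mpowi \<Gamma> i *\<^sub>v e) \<bullet> ((H * X * F') *\<^sub>v (mpowi \<Gamma> j *\<^sub>v e))"
    proof (rule sym_bilin[OF cY _ _ Ys])
      have "\<exists>d e. mpowi \<Gamma> j = Tmat ks js d e" using mpowi_Tmat[OF nzk nzj, of j] by (simp add: \<Gamma>_def)
      then obtain d1 e1 where "mpowi \<Gamma> j = Tmat ks js d1 e1" by blast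
      then show "mpowi \<Gamma> j *\<^sub>v e \<in> carrier_vec N" using ce mult_mat_vec_carrier[OF Tmat_carrier, of _ ks js] by (simp add: N_def)
      have "\<exists>d e. mpowi \<Gamma> i = Tmat ks js d e" using mpowi_Tmat[OF nzk nzj, of i] by (simp add: \<Gamma>_def)
      then obtain d2 e2 where "mpowi \<Gamma> i = Tmat ks js d2 e2" by blast
      then show "mpowi \<Gamma> i *\<^sub>v e \<in> carrier_vec N" using ce mult_mat_vec_carrier[OF Tmat_carrier, of _ ks js] by (simp add: N_def)
    qed
    also have "\<dots> = c \<bullet> (mpowi \<Gamma> i * minv (1\<^sub>m N + M') * mpowi \<Gamma> j *\<^sub>v r')"
      by (rule key[symmetric]) auto
    finally show "c \<bullet> (mpowi \<Gamma> j * minv (1\<^sub>m N + M') * mpowi \<Gamma> i *\<^sub>v r') = c \<bullet> (mpowi \<Gamma> i * minv (1\<^sub>m N + M') * mpowi \<Gamma> j *\<^sub>v r')" .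
  qed
qed

end
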